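(* For any $\alpha>0$ there exists $\beta_0>0$ such that the following holds for all $0<\beta\le\beta_0$. Let $\Lambda_1,\dots,\Lambda_m\subseteq\mathbb{R}^d$ be hyperplanes, let $b\in\bigcap_{i\in[m]}\Lambda_i$, and let $j$ be the smallest integer for which the set $V=\{v_1,\dots,v_m\}$ of their unit normal vectors is $(j,\beta^j)$-flat with respect to some $j$-plane $\Lambda_B$ with $b\in\Lambda_B$. If for some point $p$ the angle between $v=b-p$ and $\Lambda_i$ is at most $\beta^d$ for every $i\in[m]$, then the angle between $v$ and $\Lambda:=\Lambda_B(b)^{\perp}$ is at most $\alpha$.
   Context: A $j$-plane is an affine subspace of dimension $j$. The angle between a vector $v$ and a plane $\Lambda$ is the infimum of the angles between $v$ and vectors $w\in\Lambda-\Lambda$. A set of vectors $V$ is $(j,\alpha)$-flat with respect to a $j$-plane $\Lambda$ if every $v\in V$ makes angle at most $\alpha$ with $\Lambda$. For a $j$-plane $\gamma\subseteq\mathbb{R}^{d}$ and a point $p\in\gamma$, $\gamma(p)^{\perp}$ denotes the $(d-j)$-plane through $p$ orthogonal to $\gamma$. *)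

theory Defs
  imports "HOL-Analysis.Analysis"
begin

text \<open>Angle between two vectors (arccos convention; a zero vector gives pi/2).\<close>
definition vec_angle :: "'a::real_inner \<Rightarrow> 'a \<Rightarrow> real" where
  "vec_angle v w = arccos ((v \<bullet> w) / (norm v * norm w))"

definition diffs :: "'a::real_vector set \<Rightarrow> 'a set" where
  "diffs L = {x - y | x y. x \<in> L \<and> y \<in> L}"

definition plane_angle :: "'a::real_inner \<Rightarrow> 'a set \<Rightarrow> real" where
  "plane_angle v L = Inf (vec_angle v ` diffs L)"

definition is_plane :: "nat \<Rightarrow> 'a::euclidean_space set \<Rightarrow> bool" where
  "is_plane j L \<longleftrightarrow> affine L \<and> L \<noteq> {} \<and> aff_dim L = int j"

definition flat_wrt :: "nat \<Rightarrow> real \<Rightarrow> 'a::euclidean_space set \<Rightarrow> 'a set \<Rightarrow> bool" where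
  "flat_wrt j \<alpha> V L \<longleftrightarrow> is_plane j L \<and> (\<forall>v\<in>V. plane_angle v L \<le> \<alpha>)"

definition orth_plane :: "'a::euclidean_space set \<Rightarrow> 'a \<Rightarrow> 'a set" where
  "orth_plane L p = {x. \<forall>w\<in>diffs L. (x - p) \<bullet> w = 0}"

definition unit_normal :: "'a::euclidean_space \<Rightarrow> 'a set \<Rightarrow> bool" where
  "unit_normal n H \<longleftrightarrow> norm n = 1 \<and> (\<forall>w\<in>diffs H. n \<bullet> w = 0)"

end

theory Submission
  imports Defs
begin


lemma sin_lower: fixes x::real assumes "0 \<le> x" "x \<le> 1" shows "x/2 \<le> sin x"
proof -
  have "\<bar>sin x - (\<Sum>m<3. sin_coeff m * x ^ m)\<bar> \<le> inverse (fact 3) * \<bar>x\<bar> ^ 3"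
    by (rule Maclaurin_sin_bound)
  moreover have "(\<Sum>m<3. sin_coeff m * x ^ m) = x" by (simp add: numeral_3_eq_3 sin_coeff_def)
  moreover have f3: "(fact 3 :: real) = 6" by (simp add: numeral_3_eq_3)
  moreover have f: "inverse (fact 3 :: real) * \<bar>x\<bar> ^ 3 = x^3/6" using assms unfolding f3 by simp
  ultimately have "\<bar>sin x - x\<bar> \<le> x^3/6" by simp
  moreover have "x^3 \<le> x"
  proof -
    have "x^2 \<le> 1" using assms by (simp add: power_le_one)
    then have "x * x^2 \<le> x * 1" using mult_left_mono[of "x^2" 1 x] assms by simp
    then show ?thesis by (simp add: power3_eq_cube power2_eq_square)
  qed
  ultimately show ?thesis using assms by linarith
qed

lemma vec_angle_arg:
  fixes v w :: "'a::real_inner"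
  shows "-1 \<le> (v \<bullet> w) / (norm v * norm w) \<and> (v \<bullet> w) / (norm v * norm w) \<le> 1"
proof (cases "norm v * norm w = 0")
  case True then show ?thesis by auto
next
  case False
  then have p: "norm v * norm w > 0" by (simp add: less_le)
  have "\<bar>v \<bullet> w\<bar> \<le> norm v * norm w" by (rule Cauchy_Schwarz_ineq2)
  then show ?thesis using p by (simp add: abs_le_iff divide_le_eq le_divide_eq)
qed

lemma plane_angle_lower:
  fixes x y z :: "'a::euclidean_space"
  assumes L: "L \<noteq> {}" and x: "x \<noteq> 0" and xyz: "x = y + z" and yz: "y \<bullet> z = 0"
    and zw: "\<forall>w\<in>diffs L. z \<bullet> w = 0"
  shows "arccos (norm y / norm x) \<le> plane_angle x L"
proof -
  have nx: "norm x ^ 2 = norm y ^ 2 + norm z ^ 2"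
    using norm_add_Pythagorean[of y z] yz xyz by (simp add: orthogonal_def)
  have "norm y ^ 2 \<le> norm x ^ 2" using nx by simp
  then have "norm y \<le> norm x" by (rule power2_le_imp_le) simp
  then have le1: "norm y / norm x \<le> 1" using x by simp
  have ne: "diffs L \<noteq> {}" using L unfolding diffs_def by blast
  show ?thesis unfolding plane_angle_def
  proof (rule cInf_greatest)
    show "vec_angle x ` diffs L \<noteq> {}" using ne by simp
  next
    fix t assume "t \<in> vec_angle x ` diffs L"
    then obtain w where w: "w \<in> diffs L" and t: "t = vec_angle x w" by blast
    have "(x \<bullet> w) / (norm x * norm w) \<le> norm y / norm x"
    proof (cases "w = 0")
      case True then show ?thesis by simp
    next
      case False
      have "x \<bullet> w = y \<bullet> w" using xyz zw w by (simp add: inner_add_left)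
      also have "\<dots> \<le> norm y * norm w" by (rule norm_cauchy_schwarz)
      finally have "x \<bullet> w \<le> norm y * norm w" .
      then have "(x \<bullet> w) / (norm x * norm w) \<le> (norm y * norm w) / (norm x * norm w)"
        using False x by (intro divide_right_mono) auto
      then show ?thesis using False by simp
    qed
    then show "arccos (norm y / norm x) \<le> t" unfolding t vec_angle_def
      using vec_angle_arg[of x w] le1 by (intro arccos_le_arccos) auto
  qed
qed

lemma plane_angle_lower_cos:
  fixes x y z :: "'a::euclidean_space"
  assumes L: "L \<noteq> {}" and x: "x \<noteq> 0" and xyz: "x = y + z" and yz: "y \<bullet> z = 0"
    and zw: "\<forall>w\<in>diffs L. z \<bullet> w = 0" and th: "plane_angle x L \<le> \<theta>" "\<theta> \<le> pi"
  shows "cos \<theta> * norm x \<le> norm y"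
proof -
  have nx: "norm x ^ 2 = norm y ^ 2 + norm z ^ 2"
    using norm_add_Pythagorean[of y z] yz xyz by (simp add: orthogonal_def)
  have "norm y ^ 2 \<le> norm x ^ 2" using nx by simp
  then have "norm y \<le> norm x" by (rule power2_le_imp_le) simp
  then have le1: "norm y / norm x \<le> 1" using x by simp
  have ge0: "0 \<le> norm y / norm x" by simp
  have a: "arccos (norm y / norm x) \<le> \<theta>" using plane_angle_lower[OF assms(1-5)] th by linarith
  have "cos \<theta> \<le> cos (arccos (norm y / norm x))"
    using a th(2) arccos_lbound[of "norm y / norm x"] le1 ge0 by (intro cos_monotone_0_pi_le) auto
  also have "\<dots> = norm y / norm x"
  proof -
    have m1: "-1 \<le> norm y / norm x" using ge0 by linarith
    show ?thesis by (rule cos_arccos[OF m1 le1])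
  qed
  finally show ?thesis using x by (simp add: le_divide_eq)
qed

lemma plane_angle_upper:
  fixes x y :: "'a::euclidean_space"
  assumes y: "y \<in> diffs L" and x: "x \<noteq> 0" and xy: "x \<bullet> y = y \<bullet> y"
  shows "plane_angle x L \<le> arccos (norm y / norm x)"
proof -
  have "vec_angle x y = arccos (norm y / norm x)"
  proof (cases "y = 0")
    case True then show ?thesis by (simp add: vec_angle_def)
  next
    case False
    have "x \<bullet> y = norm y * norm y" using xy by (simp add: dot_square_norm power2_eq_square)
    then show ?thesis using False by (simp add: vec_angle_def)
  qed
  moreover have "bdd_below (vec_angle x ` diffs L)"
    unfolding vec_angle_def using vec_angle_arg[of x] arccos_lbound
    by (intro bdd_belowI[of _ 0]) auto
  ultimately show ?thesis unfolding plane_angle_def using y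
    by (metis cInf_lower imageI)
qed



lemma main_step:
  fixes H :: "nat \<Rightarrow> 'a::euclidean_space set" and nv :: "nat \<Rightarrow> 'a"
  assumes s0: "0 < s" and s1: "s \<le> 1" and a0: "0 \<le> a" and a1: "a \<le> 1" and sa: "s = sin a"
    and \<beta>0: "0 < \<beta>" and \<beta>s: "\<beta> \<le> s/8"
    and hH: "\<forall>i<m. is_plane (DIM('a) - 1) (H i)"
    and hN: "\<forall>i<m. unit_normal (nv i) (H i)"
    and hF: "flat_wrt j (\<beta> ^ j) (nv ` {..<m}) LB" and hbL: "b \<in> LB"
    and hmin: "\<forall>j'<j. \<not> (\<exists>L. flat_wrt j' (\<beta> ^ j') (nv ` {..<m}) L \<and> b \<in> L)"
    and hp: "p \<noteq> b"
    and hA: "\<forall>i<m. plane_angle (b - p) (H i) \<le> \<beta> ^ DIM('a)"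
  shows "plane_angle (b - p) (orth_plane LB b) \<le> a"
proof -
  define u where "u = b - p"
  have u0: "u \<noteq> 0" using hp by (simp add: u_def)
  have nu0: "norm u > 0" using u0 by simp
  define S where "S = span (diffs LB)"
  have subS: "subspace S" unfolding S_def by simp
  obtain y z where y: "y \<in> S" and z: "\<And>w. w \<in> S \<Longrightarrow> orthogonal z w" and uyz: "u = y + z"
    using orthogonal_subspace_decomp_exists[of "diffs LB" u] unfolding S_def by metis
  have yz: "y \<bullet> z = 0" using z[OF y] by (simp add: orthogonal_def inner_commute)
  have nu: "norm u ^ 2 = norm y ^ 2 + norm z ^ 2"
    using norm_add_Pythagorean[of y z] yz uyz by (simp add: orthogonal_def)
  have zS: "z \<bullet> w = 0" if "w \<in> S" for w using z[OF that] by (simp add: orthogonal_def)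
  have ca: "cos a ^ 2 = 1 - s ^ 2" using sa cos_squared_eq by simp
  have ca0: "0 \<le> cos a" using a0 a1 pi_gt3 by (intro cos_ge_zero) auto
  show ?thesis
  proof (cases "norm y \<le> s * norm u")
    case True
    have "(norm y) ^ 2 \<le> (s * norm u) ^ 2" using True by (intro power_mono) auto
    moreover have "(cos a * norm u)^2 = norm u^2 - (s * norm u)^2" unfolding power_mult_distrib ca by (simp add: algebra_simps)
    ultimately have "(cos a * norm u) ^ 2 \<le> norm z ^ 2" using nu by linarith
    then have cz: "cos a * norm u \<le> norm z" by (rule power2_le_imp_le) simp
    have "norm z ^ 2 \<le> norm u ^ 2" using nu by simp
    then have zu: "norm z \<le> norm u" by (rule power2_le_imp_le) simp
    have zd: "z \<in> diffs (orth_plane LB b)"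
    proof -
      have "z + b \<in> orth_plane LB b" unfolding orth_plane_def S_def
        using zS unfolding S_def by (auto intro: span_base)
      moreover have "b \<in> orth_plane LB b" unfolding orth_plane_def by simp
      ultimately show ?thesis unfolding diffs_def by force
    qed
    have uz: "u \<bullet> z = z \<bullet> z" using uyz yz by (simp add: inner_add_left)
    have "plane_angle u (orth_plane LB b) \<le> arccos (norm z / norm u)"
      by (rule plane_angle_upper[OF zd u0 uz])
    also have "\<dots> \<le> arccos (cos a)"
      using cz zu nu0 by (intro arccos_le_arccos) (auto simp: le_divide_eq)
    also have "\<dots> = a" using a0 a1 pi_gt3 by (intro arccos_cos) auto
    finally show ?thesis unfolding u_def .
  next
    case False
    then have ys: "s * norm u < norm y" by simp
    have y0: "y \<noteq> 0" using ys s0 nu0 by (metis mult_pos_pos norm_zero not_less_iff_gr_or_eq)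
    have plj: "is_plane j LB" using hF unfolding flat_wrt_def by simp
    then have affLB: "affine LB" and LBne: "LB \<noteq> {}" and adLB: "aff_dim LB = int j"
      unfolding is_plane_def by auto
    have "aff_dim LB = int (dim ((\<lambda>x. x - b) ` LB))"
      using hbL by (intro aff_dim_eq_dim_subtract) (simp add: hull_inc)
    moreover have "span ((\<lambda>x. x - b) ` LB) = S" unfolding S_def span_eq
    proof
      show "(\<lambda>x. x - b) ` LB \<subseteq> span (diffs LB)"
        using hbL unfolding diffs_def by (auto intro!: span_base)
      show "diffs LB \<subseteq> span ((\<lambda>x. x - b) ` LB)"
      proof
        fix w assume "w \<in> diffs LB"
        then obtain x1 x2 where w: "w = x1 - x2" "x1 \<in> LB" "x2 \<in> LB" unfolding diffs_def by blast
        have "(x1 - b) - (x2 - b) \<in> span ((\<lambda>x. x - b) ` LB)"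
          using w by (intro span_diff span_base) auto
        then show "w \<in> span ((\<lambda>x. x - b) ` LB)" using w by simp
      qed
    qed
    ultimately have jS: "j = dim S" using adLB by (metis dim_span of_nat_eq_iff)
    have j1: "j \<ge> 1"
    proof (rule ccontr)
      assume "\<not> j \<ge> 1" then have "dim S = 0" using jS by linarith
      then have "S \<subseteq> {0}" by (simp only: dim_eq_0)
      then show False using y y0 by auto
    qed
    have jd: "j \<le> DIM('a)" using aff_dim_le_DIM[of LB] adLB by simp
    have \<beta>1: "\<beta> \<le> 1" using \<beta>s s1 by simp
    define x where "x = \<beta> ^ (j - 1)"
    have x0: "0 < x" and x1: "x \<le> 1" unfolding x_def using \<beta>0 \<beta>1 by (auto intro: power_le_one)
    have bj: "\<beta> ^ j = \<beta> * x" unfolding x_def using j1 by (metis Suc_diff_1 less_le_trans power_Suc zero_less_one)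
    have bd: "\<beta> ^ DIM('a) \<le> \<beta> * x" unfolding bj[symmetric] using jd \<beta>0 \<beta>1 by (intro power_decreasing) auto
    define T where "T = {w. y \<bullet> w = 0}"
    define U where "U = S \<inter> T"
    have subT: "subspace T" unfolding T_def by (rule subspace_hyperplane)
    have subU: "subspace U" unfolding U_def using subS subT by (rule subspace_inter)
    have "dim {v + w |v w. v \<in> S \<and> w \<in> T} + dim U = dim S + dim T"
      unfolding U_def by (rule dim_sums_Int[OF subS subT])
    moreover have "{v + w |v w. v \<in> S \<and> w \<in> T} = UNIV"
    proof -
      have "v \<in> {v + w |v w. v \<in> S \<and> w \<in> T}" for v
      proof -
        define c where "c = (y \<bullet> v) / (y \<bullet> y)"
        have "c *\<^sub>R y \<in> S" using y subS by (simp add: subspace_mul)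
        moreover have "v - c *\<^sub>R y \<in> T" using y0 unfolding T_def c_def by (simp add: inner_diff_right)
        ultimately show ?thesis by force
      qed
      then show ?thesis by blast
    qed
    moreover have "dim T = DIM('a) - 1" unfolding T_def using y0 by (rule dim_hyperplane)
    ultimately have dimU: "dim U = j - 1" using jS jd by simp
    define L where "L = (+) b ` U"
    have U0: "0 \<in> U" using subU by (simp add: subspace_0)
    have affU: "affine U" by (rule subspace_imp_affine[OF subU])
    have affL: "affine L" unfolding L_def using affine_translation[of U b] affU by blast
    have adL: "aff_dim L = int (j - 1)" unfolding L_def
      using aff_dim_translation_eq[of b U] aff_dim_subspace[OF subU] dimU by simp
    have "L \<noteq> {}" unfolding L_def using U0 by blast
    then have plL: "is_plane (j - 1) L" unfolding is_plane_def using affL adL by blast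
    have bx1: "\<beta> * x \<le> 1" using \<beta>1 x1 x0 \<beta>0 by (simp add: mult_le_one)
    have bL: "b \<in> L" unfolding L_def using U0 by force
    have dL: "diffs L = U"
    proof
      show "diffs L \<subseteq> U" unfolding diffs_def L_def using subU
        by (auto simp: subspace_diff)
      show "U \<subseteq> diffs L"
      proof
        fix w assume "w \<in> U"
        then have "b + w \<in> L" "b + 0 \<in> L" unfolding L_def using U0 by auto
        then show "w \<in> diffs L" unfolding diffs_def by force
      qed
    qed
    have flatL: "flat_wrt (j - 1) (\<beta> ^ (j - 1)) (nv ` {..<m}) L"
      unfolding flat_wrt_def
    proof (intro conjI plL ballI)
      fix v assume "v \<in> nv ` {..<m}"
      then obtain i where i: "i < m" and vi: "v = nv i" by blast
      have nv1: "norm v = 1" and vH: "\<forall>w\<in>diffs (H i). v \<bullet> w = 0"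
        using hN i vi unfolding unit_normal_def by auto
      have v0: "v \<noteq> 0" using nv1 by auto
      have Hne: "H i \<noteq> {}" using hH i unfolding is_plane_def by auto
      obtain yi zi where yi: "yi \<in> span (diffs (H i))" and zi: "\<And>w. w \<in> span (diffs (H i)) \<Longrightarrow> orthogonal zi w"
        and uyzi: "u = yi + zi"
        using orthogonal_subspace_decomp_exists[of "diffs (H i)" u] by metis
      have yzi: "yi \<bullet> zi = 0" using zi[OF yi] by (simp add: orthogonal_def inner_commute)
      have ziw: "\<forall>w\<in>diffs (H i). zi \<bullet> w = 0" using zi by (simp add: orthogonal_def span_base)
      have bdpi: "\<beta> ^ DIM('a) \<le> pi" using bd bx1 pi_gt3 by linarith
      have cyi: "cos (\<beta> ^ DIM('a)) * norm u \<le> norm yi"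
        using plane_angle_lower_cos[OF Hne u0 uyzi yzi ziw] hA i bdpi unfolding u_def by auto
      have nui: "norm u ^ 2 = norm yi ^ 2 + norm zi ^ 2"
        using norm_add_Pythagorean[of yi zi] yzi uyzi by (simp add: orthogonal_def)
      define td where "td = \<beta> ^ DIM('a)"
      have td0: "0 \<le> td" unfolding td_def using \<beta>0 by simp
      have td1: "td \<le> \<beta> * x" unfolding td_def by (rule bd)
      have c0: "0 \<le> cos td" using td0 td1 bx1 pi_gt3 by (intro cos_ge_zero) auto
      have cy2: "(cos td * norm u) ^ 2 \<le> norm yi ^ 2" using cyi c0 unfolding td_def[symmetric] by (intro power_mono) auto
      have st: "sin td ^ 2 \<le> (\<beta> * x) ^ 2"
        using sin_x_le_x[OF td0] td1 sin_ge_zero[of td] td0 td1 bx1 pi_gt3 by (intro power_mono) auto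
      have "norm zi ^ 2 \<le> norm u ^ 2 - (cos td * norm u) ^ 2" using nui cy2 by linarith
      also have "\<dots> = sin td ^ 2 * norm u ^ 2" unfolding power_mult_distrib cos_squared_eq[of td]
        by (simp add: algebra_simps)
      also have "\<dots> \<le> (\<beta> * x) ^ 2 * norm u ^ 2" using st by (rule mult_right_mono) simp
      finally have zi2: "norm zi ^ 2 \<le> (\<beta> * x * norm u) ^ 2" by (simp only: power_mult_distrib)
      have ziB: "norm zi \<le> \<beta> * x * norm u" using power2_le_imp_le[OF zi2] \<beta>0 x0 by auto
      have yiv: "yi \<bullet> v = 0" using orthogonal_to_span[OF yi, of v] vH
        by (simp add: orthogonal_def inner_commute)
      have uv: "\<bar>u \<bullet> v\<bar> \<le> \<beta> * x * norm u"
      proof -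
        have "u \<bullet> v = zi \<bullet> v" using uyzi yiv by (simp add: inner_add_left)
        then have "\<bar>u \<bullet> v\<bar> \<le> norm zi" using Cauchy_Schwarz_ineq2[of zi v] nv1 by simp
        then show ?thesis using ziB by simp
      qed
      obtain pW r where pW: "pW \<in> S" and r: "\<And>w. w \<in> S \<Longrightarrow> orthogonal r w" and vpr: "v = pW + r"
        using orthogonal_subspace_decomp_exists[of "diffs LB" v] unfolding S_def by metis
      have pr: "pW \<bullet> r = 0" using r[OF pW] by (simp add: orthogonal_def inner_commute)
      have rS: "r \<bullet> w = 0" if "w \<in> S" for w using r[OF that] by (simp add: orthogonal_def)
      have rw: "\<forall>w\<in>diffs LB. r \<bullet> w = 0" using rS unfolding S_def by (simp add: span_base)
      have bx0: "0 \<le> \<beta> * x" using \<beta>0 x0 by simp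
      have "plane_angle v LB \<le> \<beta> * x" using hF i vi bj unfolding flat_wrt_def by auto
      then have cpW: "cos (\<beta> * x) \<le> norm pW"
        using plane_angle_lower_cos[OF LBne v0 vpr pr rw] nv1 bx1 pi_gt3 by auto
      have nv: "1 = norm pW ^ 2 + norm r ^ 2"
        using norm_add_Pythagorean[of pW r] pr vpr nv1 by (simp add: orthogonal_def)
      have cb0: "0 \<le> cos (\<beta> * x)" using bx0 bx1 pi_gt3 by (intro cos_ge_zero) auto
      have "cos (\<beta> * x) ^ 2 \<le> norm pW ^ 2" using cpW cb0 by (intro power_mono) auto
      moreover have sbx: "sin (\<beta> * x) ^ 2 \<le> (\<beta> * x) ^ 2"
        using sin_x_le_x[OF bx0] sin_ge_zero[of "\<beta> * x"] bx0 bx1 pi_gt3 by (intro power_mono) auto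
      ultimately have r2: "norm r ^ 2 \<le> (\<beta> * x) ^ 2" using nv cos_squared_eq[of "\<beta> * x"] by linarith
      have rB: "norm r \<le> \<beta> * x" using power2_le_imp_le[OF r2] bx0 by auto
      define c where "c = (pW \<bullet> y) / (y \<bullet> y)"
      define q where "q = pW - c *\<^sub>R y"
      have qS: "q \<in> S" unfolding q_def using pW y subS by (simp add: subspace_diff subspace_mul)
      have qy: "y \<bullet> q = 0" unfolding q_def c_def using y0 by (simp add: inner_diff_right inner_commute)
      have qU: "q \<in> diffs L" unfolding dL U_def T_def using qS qy by simp
      have rq: "r \<bullet> q = 0" using rS[OF qS] .
      have vq: "v \<bullet> q = q \<bullet> q"
      proof -
        have "v = q + c *\<^sub>R y + r" unfolding q_def using vpr by simp
        then have "v \<bullet> q = q \<bullet> q + c * (y \<bullet> q) + r \<bullet> q" by (simp add: inner_add_left)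
        then show ?thesis using qy rq by simp
      qed
      have up: "plane_angle v L \<le> arccos (norm q)"
        using plane_angle_upper[OF qU v0 vq] nv1 by simp
      have cx0: "0 \<le> cos x" using x0 x1 pi_gt3 by (intro cos_ge_zero) auto
      have qx: "cos x \<le> norm q"
      proof (rule ccontr)
        assume "\<not> cos x \<le> norm q"
        then have "norm q < cos x" by simp
        then have q2: "norm q ^ 2 < cos x ^ 2" by (intro power_strict_mono) auto
        define K where "K = \<bar>c\<bar> * norm y"
        have K0: "0 \<le> K" unfolding K_def by simp
        have pWq: "pW = q + c *\<^sub>R y" unfolding q_def by simp
        have "norm pW ^ 2 = norm q ^ 2 + norm (c *\<^sub>R y) ^ 2"
          unfolding pWq using qy by (intro norm_add_Pythagorean) (simp add: orthogonal_def inner_commute)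
        then have pW2: "norm pW ^ 2 = norm q ^ 2 + K ^ 2" unfolding K_def by (simp add: power_mult_distrib)
        have "sin x ^ 2 \<ge> (x / 2) ^ 2" using sin_lower[of x] x0 x1 by (intro power_mono) auto
        moreover have "(x / 2) ^ 2 = x ^ 2 / 4" by (simp add: power_divide)
        ultimately have K2: "K ^ 2 > x ^ 2 / 4 - (\<beta> * x) ^ 2"
          using pW2 q2 sbx \<open>cos (\<beta> * x) ^ 2 \<le> norm pW ^ 2\<close> cos_squared_eq[of x] cos_squared_eq[of "\<beta> * x"]
          by linarith
        have uv2: "u \<bullet> v = c * (y \<bullet> y) + z \<bullet> r"
        proof -
          have "z \<bullet> q = 0" using zS[OF qS] .
          moreover have "y \<bullet> r = 0" using rS[OF y] by (simp add: inner_commute)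
          moreover have "z \<bullet> y = 0" using yz by (simp add: inner_commute)
          ultimately show ?thesis unfolding uyz vpr pWq
            using qy by (simp add: inner_add_left inner_add_right)
        qed
        have "norm z ^ 2 \<le> norm u ^ 2" using nu by simp
        then have zu: "norm z \<le> norm u" by (rule power2_le_imp_le) simp
        have "\<bar>z \<bullet> r\<bar> \<le> norm z * norm r" by (rule Cauchy_Schwarz_ineq2)
        also have "\<dots> \<le> norm u * (\<beta> * x)" using zu rB by (intro mult_mono) auto
        finally have zr: "\<bar>z \<bullet> r\<bar> \<le> \<beta> * x * norm u" by (simp add: mult.commute)
        have "K * norm y = \<bar>c * (y \<bullet> y)\<bar>" unfolding K_def by (simp add: abs_mult power2_norm_eq_inner[symmetric] power2_eq_square)
        also have "\<dots> \<le> \<bar>u \<bullet> v\<bar> + \<bar>z \<bullet> r\<bar>" unfolding uv2 by linarith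
        finally have "K * norm y \<le> 2 * (\<beta> * x) * norm u" using uv zr by linarith
        moreover have "K * (s * norm u) \<le> K * norm y" using K0 ys by (intro mult_left_mono) auto
        ultimately have "(K * s) * norm u \<le> (2 * \<beta> * x) * norm u" by (simp add: algebra_simps)
        then have Ks: "K * s \<le> 2 * \<beta> * x" using nu0 by simp
        then have "(K * s) ^ 2 \<le> (2 * \<beta> * x) ^ 2" using K0 s0 by (intro power_mono) auto
        then have A1: "K^2 * s^2 \<le> 4 * \<beta>^2 * x^2" by (simp add: power_mult_distrib)
        have A2: "K^2 * s^2 \<ge> (x ^ 2 / 4 - (\<beta> * x) ^ 2) * s^2" using K2 s0 by (intro mult_right_mono) auto
        have b2: "\<beta>^2 \<le> s^2 / 64" using \<beta>s \<beta>0 power_mono[of \<beta> "s/8" 2] by (simp add: power_divide)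
        have s2: "s^2 \<le> 1" using s0 s1 by (simp add: power_le_one)
        have "(x ^ 2 / 4 - (\<beta> * x) ^ 2) * s^2 = (1/4 - \<beta>^2) * s^2 * x^2" by (simp add: power_mult_distrib algebra_simps)
        then have "(1/4 - \<beta>^2) * s^2 * x^2 \<le> 4 * \<beta>^2 * x^2" using A1 A2 by linarith
        then have P1: "(1/4 - \<beta>^2) * s^2 \<le> 4 * \<beta>^2" using x0 by (simp add: mult_le_cancel_right)
        have P2: "(1/4 - 1/64) * s^2 \<le> (1/4 - \<beta>^2) * s^2" using b2 s2 by (intro mult_right_mono) auto
        have "(1/4 - 1/64) * s^2 \<le> 4 * \<beta>^2" using P1 P2 by (rule order_trans[rotated])
        then have "15 * s^2 \<le> 256 * \<beta>^2" by simp
        moreover have "256 * \<beta>^2 \<le> 4 * s^2" using b2 by simp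
        moreover have "s^2 > 0" using s0 by simp
        ultimately show False by linarith
      qed
      have q1: "norm q \<le> 1"
      proof (cases "norm q = 0")
        case False
        have "norm q * norm q = v \<bullet> q" using vq by (simp add: dot_square_norm power2_eq_square)
        also have "\<dots> \<le> norm v * norm q" using Cauchy_Schwarz_ineq2[of v q] by simp
        finally have "norm q * norm q \<le> 1 * norm q" using nv1 by simp
        then show ?thesis using False by (simp add: mult_le_cancel_right)
      qed simp
      have "arccos (norm q) \<le> arccos (cos x)"
        using qx cx0 q1 by (intro arccos_le_arccos) auto
      also have "\<dots> = x" using x0 x1 pi_gt3 by (intro arccos_cos) auto
      finally show "plane_angle v L \<le> \<beta> ^ (j - 1)" using up unfolding x_def by linarith

    qed
    then show ?thesis using hmin j1 bL by (metis diff_less zero_less_one less_le_trans)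
  qed
qed

theorem lemma4:
  fixes \<alpha> :: real
  assumes "\<alpha> > 0"
  shows "\<exists>\<beta>0>0. \<forall>\<beta>. 0 < \<beta> \<and> \<beta> \<le> \<beta>0 \<longrightarrow>
    (\<forall>(m::nat) (H::nat \<Rightarrow> 'a::euclidean_space set) (nv::nat \<Rightarrow> 'a) (b::'a) (j::nat) (LB::'a set) (p::'a).
      (\<forall>i<m. is_plane (DIM('a) - 1) (H i)) \<and>
      (\<forall>i<m. unit_normal (nv i) (H i)) \<and>
      (\<forall>i<m. b \<in> H i) \<and>
      flat_wrt j (\<beta> ^ j) (nv ` {..<m}) LB \<and> b \<in> LB \<and>
      (\<forall>j'<j. \<not> (\<exists>L. flat_wrt j' (\<beta> ^ j') (nv ` {..<m}) L \<and> b \<in> L)) \<and>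
      p \<noteq> b \<and>
      (\<forall>i<m. plane_angle (b - p) (H i) \<le> \<beta> ^ DIM('a))
      \<longrightarrow> plane_angle (b - p) (orth_plane LB b) \<le> \<alpha>)"
  proof -
  define a where "a = min \<alpha> 1"
  define s where "s = sin a"
  have a0: "0 < a" and a1: "a \<le> 1" and aa: "a \<le> \<alpha>" using assms unfolding a_def by auto
  have s0: "0 < s" unfolding s_def using a0 a1 pi_gt3 by (intro sin_gt_zero) auto
  have s1: "s \<le> 1" unfolding s_def by simp
  show ?thesis
  proof (rule exI[of _ "s/8"], intro conjI allI impI, goal_cases)
    case 1 show ?case using s0 by simp
  next
    case (2 \<beta> m H nv b j LB p)
    have "plane_angle (b - p) (orth_plane LB b) \<le> a"
      apply (rule main_step[OF s0 s1 _ a1 s_def, where \<beta>=\<beta> and m=m and nv=nv and H=H and j=j])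
      using 2 a0 apply auto
      done
    then show ?case using aa by linarith
  qed
qed

end
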